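(* Every $\mathcal{TPTG}$-regular Lawson paratopological group is a topological group, where $\mathcal{TPTG}$ denotes the class of topologically periodic topological groups.
   Context: All topological spaces are Hausdorff. A paratopological group is a group with a Hausdorff topology making multiplication continuous; a topological group additionally has continuous inversion. A paratopological group is Lawson if it has a neighborhood base at the unit consisting of subsemigroups. A paratopological group $G$ is topologically periodic if for every $x\in G$ and every neighborhood $U$ of the unit there is $n\ge1$ with $x^n\in U$. A continuous map $h:X\to Y$ is regular if for each $x\in X$ and neighborhood $U$ of $x$ there is a closed $F\subset Y$ such that $h^{-1}(F)$ is a closed neighborhood of $x$ contained in $U$. For a class $\mathcal G$ of topological groups, a paratopological group is $\mathcal G$-regular if it admits a regular continuous homomorphism onto a topological group belonging to $\mathcal G$. *)

theory Defs
  imports "HOL-Analysis.Analysis" "HOL-Algebra.Group"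
begin

definition paratopological_group :: "('a, 'm) monoid_scheme \<Rightarrow> 'a topology \<Rightarrow> bool" where
  "paratopological_group G T \<longleftrightarrow>
     group G \<and> topspace T = carrier G \<and> Hausdorff_space T \<and>
     continuous_map (prod_topology T T) T (\<lambda>(x, y). x \<otimes>\<^bsub>G\<^esub> y)"

definition topological_group :: "('a, 'm) monoid_scheme \<Rightarrow> 'a topology \<Rightarrow> bool" where
  "topological_group G T \<longleftrightarrow>
     paratopological_group G T \<and> continuous_map T T (\<lambda>x. inv\<^bsub>G\<^esub> x)"

definition Lawson :: "('a, 'm) monoid_scheme \<Rightarrow> 'a topology \<Rightarrow> bool" where
  "Lawson G T \<longleftrightarrow>
     (\<forall>U. openin T U \<and> \<one>\<^bsub>G\<^esub> \<in> U \<longrightarrow>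
        (\<exists>V. V \<subseteq> U \<and> \<one>\<^bsub>G\<^esub> \<in> T interior_of V \<and>
             (\<forall>x\<in>V. \<forall>y\<in>V. x \<otimes>\<^bsub>G\<^esub> y \<in> V)))"

definition topologically_periodic :: "('a, 'm) monoid_scheme \<Rightarrow> 'a topology \<Rightarrow> bool" where
  "topologically_periodic G T \<longleftrightarrow>
     (\<forall>x\<in>carrier G. \<forall>U. openin T U \<and> \<one>\<^bsub>G\<^esub> \<in> U \<longrightarrow>
        (\<exists>n::nat. n \<ge> 1 \<and> x [^]\<^bsub>G\<^esub> n \<in> U))"

definition regular_map :: "'a topology \<Rightarrow> 'b topology \<Rightarrow> ('a \<Rightarrow> 'b) \<Rightarrow> bool" where
  "regular_map X Y h \<longleftrightarrow>
     continuous_map X Y h \<and>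
     (\<forall>x\<in>topspace X. \<forall>U. openin X U \<and> x \<in> U \<longrightarrow>
        (\<exists>F. closedin Y F \<and>
             closedin X {z \<in> topspace X. h z \<in> F} \<and>
             x \<in> X interior_of {z \<in> topspace X. h z \<in> F} \<and>
             {z \<in> topspace X. h z \<in> F} \<subseteq> U))"

text \<open>h is a regular continuous homomorphism of (G,T) onto the topologically periodic
 topological group (H,S). A paratopological group is TPTG-regular iff such H, S, h exist.\<close>
definition TPTG_regular_witness ::
  "('a, 'm) monoid_scheme \<Rightarrow> 'a topology \<Rightarrow> ('b, 'n) monoid_scheme \<Rightarrow> 'b topology \<Rightarrow> ('a \<Rightarrow> 'b) \<Rightarrow> bool" where
  "TPTG_regular_witness G T H S h \<longleftrightarrow>
     topological_group H S \<and> topologically_periodic H S \<and>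
     h \<in> hom G H \<and> h ` carrier G = carrier H \<and> regular_map T S h"

end

theory Submission
  imports Defs
begin

lemma para_left_cont:
  assumes "paratopological_group G T" "a \<in> carrier G"
  shows "continuous_map T T (\<lambda>y. a \<otimes>\<^bsub>G\<^esub> y)"
proof -
  have m: "continuous_map (prod_topology T T) T (\<lambda>(x, y). x \<otimes>\<^bsub>G\<^esub> y)"
    and ts: "topspace T = carrier G"
    using assms(1) unfolding paratopological_group_def by auto
  have "continuous_map T (prod_topology T T) (\<lambda>y. (a, y))"
    by (intro continuous_map_pairedI) (auto simp: ts assms(2))
  from continuous_map_compose[OF this m] show ?thesis by (simp add: o_def)
qed

lemma para_right_cont:
  assumes "paratopological_group G T" "a \<in> carrier G"
  shows "continuous_map T T (\<lambda>y. y \<otimes>\<^bsub>G\<^esub> a)"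
proof -
  have m: "continuous_map (prod_topology T T) T (\<lambda>(x, y). x \<otimes>\<^bsub>G\<^esub> y)"
    and ts: "topspace T = carrier G"
    using assms(1) unfolding paratopological_group_def by auto
  have "continuous_map T (prod_topology T T) (\<lambda>y. (y, a))"
    by (intro continuous_map_pairedI) (auto simp: ts assms(2))
  from continuous_map_compose[OF this m] show ?thesis by (simp add: o_def)
qed

lemma semigroup_pow:
  assumes "group G" "x \<in> V" "V \<subseteq> carrier G" "\<forall>x\<in>V. \<forall>y\<in>V. x \<otimes>\<^bsub>G\<^esub> y \<in> V"
  shows "x [^]\<^bsub>G\<^esub> (Suc k) \<in> V"
proof (induction k)
  case 0
  then show ?case using assms by (simp add: group.is_monoid monoid.l_one subsetD)
next
  case (Suc k)
  then show ?case using assms by (metis nat_pow_Suc)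
qed

lemma key:
  assumes P: "paratopological_group G T"
    and L: "Lawson G T"
    and W: "TPTG_regular_witness G T H S h"
    and U: "openin T U" "\<one>\<^bsub>G\<^esub> \<in> U"
  shows "\<exists>W. openin T W \<and> \<one>\<^bsub>G\<^esub> \<in> W \<and> (\<forall>x\<in>W. inv\<^bsub>G\<^esub> x \<in> U)"
proof -
  have gG: "group G" and tsG: "topspace T = carrier G"
    using P unfolding paratopological_group_def by auto
  have PH: "paratopological_group H S" and TP: "topologically_periodic H S"
    and hom: "h \<in> hom G H" and reg: "regular_map T S h"
    using W unfolding TPTG_regular_witness_def topological_group_def by auto
  have gH: "group H" and tsH: "topspace S = carrier H"
    using PH unfolding paratopological_group_def by auto
  have gh: "group_hom G H h"
    using gG gH hom by (simp add: group_hom_axioms_def group_hom_def)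
  have one_ts: "\<one>\<^bsub>G\<^esub> \<in> topspace T" using tsG gG by (simp add: group.is_monoid monoid.one_closed)
  obtain F where F: "closedin S F" and Fi: "\<one>\<^bsub>G\<^esub> \<in> T interior_of {z \<in> topspace T. h z \<in> F}"
    and FU: "{z \<in> topspace T. h z \<in> F} \<subseteq> U"
    using reg one_ts U unfolding regular_map_def by blast
  define N where "N = {z \<in> topspace T. h z \<in> F}"
  obtain V where VN: "V \<subseteq> T interior_of N" and Vi: "\<one>\<^bsub>G\<^esub> \<in> T interior_of V"
    and Vs: "\<forall>x\<in>V. \<forall>y\<in>V. x \<otimes>\<^bsub>G\<^esub> y \<in> V"
  proof -
    have "openin T (T interior_of N) \<and> \<one>\<^bsub>G\<^esub> \<in> T interior_of N"
      using Fi unfolding N_def by simp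
    from L[unfolded Lawson_def, rule_format, OF this] show ?thesis using that by blast
  qed
  have VN': "V \<subseteq> N" by (rule subset_trans[OF VN interior_of_subset])
  have VG: "V \<subseteq> carrier G" using VN' tsG N_def by auto
  have h1F: "\<one>\<^bsub>H\<^esub> \<in> F"
  proof -
    have "\<one>\<^bsub>G\<^esub> \<in> {z \<in> topspace T. h z \<in> F}"
      using Fi interior_of_subset[of T "{z \<in> topspace T. h z \<in> F}"] by blast
    then show ?thesis using group_hom.hom_one[OF gh] by simp
  qed
  show ?thesis
  proof (intro exI conjI ballI)
    show "openin T (T interior_of V)" by simp
    show "\<one>\<^bsub>G\<^esub> \<in> T interior_of V" by (rule Vi)
    fix x assume xi: "x \<in> T interior_of V"
    hence xV: "x \<in> V" using interior_of_subset[of T V] by blast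
    hence xG: "x \<in> carrier G" using VG by blast
    have hxH: "h x \<in> carrier H" using hom xG by (simp add: hom_in_carrier)
    have invH: "inv\<^bsub>H\<^esub> (h x) \<in> carrier H" using gH hxH by (simp add: group.inv_closed)
    have "inv\<^bsub>H\<^esub> (h x) \<in> F"
    proof (rule ccontr)
      assume nF: "inv\<^bsub>H\<^esub> (h x) \<notin> F"
      define Oc where "Oc = topspace S - F"
      have Oco: "openin S Oc" using F Oc_def by auto
      define Oc' where "Oc' = {y \<in> topspace S. inv\<^bsub>H\<^esub> (h x) \<otimes>\<^bsub>H\<^esub> y \<in> Oc}"
      have Oc'o: "openin S Oc'" unfolding Oc'_def
        by (rule openin_continuous_map_preimage[OF para_left_cont[OF PH invH] Oco])
      have "\<one>\<^bsub>H\<^esub> \<in> Oc'" using invH nF gH tsH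
        by (simp add: Oc'_def Oc_def group.is_monoid monoid.one_closed monoid.r_one)
      then obtain n :: nat where n1: "n \<ge> 1" and nO: "h x [^]\<^bsub>H\<^esub> n \<in> Oc'"
        using TP hxH Oc'o unfolding topologically_periodic_def by blast
      then obtain m where nm: "n = Suc m" by (cases n) auto
      have "inv\<^bsub>H\<^esub> (h x) \<otimes>\<^bsub>H\<^esub> (h x [^]\<^bsub>H\<^esub> n) = h x [^]\<^bsub>H\<^esub> m"
      proof -
        interpret H: group H by (rule gH)
        have "h x [^]\<^bsub>H\<^esub> n = h x \<otimes>\<^bsub>H\<^esub> h x [^]\<^bsub>H\<^esub> m"
          using nm hxH H.nat_pow_Suc2 by blast
        then show ?thesis using hxH
          by (simp add: H.m_assoc[symmetric])
      qed
      hence mO: "h x [^]\<^bsub>H\<^esub> m \<in> Oc" using nO Oc'_def by auto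
      have "h x [^]\<^bsub>H\<^esub> m \<in> F"
      proof (cases m)
        case 0 then show ?thesis using h1F by simp
      next
        case (Suc k)
        have "x [^]\<^bsub>G\<^esub> m \<in> V" using Suc semigroup_pow[OF gG xV VG Vs] by simp
        hence "h (x [^]\<^bsub>G\<^esub> m) \<in> F" using VN' N_def by auto
        then show ?thesis using group_hom.hom_nat_pow[OF gh xG] by simp
      qed
      then show False using mO Oc_def by auto
    qed
    hence "h (inv\<^bsub>G\<^esub> x) \<in> F" using group_hom.hom_inv[OF gh xG] by simp
    moreover have "inv\<^bsub>G\<^esub> x \<in> topspace T" using tsG gG xG by (simp add: group.inv_closed)
    ultimately show "inv\<^bsub>G\<^esub> x \<in> U" using FU by auto
  qed
qed

theorem proposition4:
  fixes G :: "('a, 'm) monoid_scheme" and T :: "'a topology"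
    and H :: "('b, 'n) monoid_scheme" and S :: "'b topology" and h :: "'a \<Rightarrow> 'b"
  assumes "paratopological_group G T"
    and "Lawson G T"
    and "TPTG_regular_witness G T H S h"
  shows "topological_group G T"
proof -
  have gG: "group G" and tsG: "topspace T = carrier G"
    using assms(1) unfolding paratopological_group_def by auto
  have "continuous_map T T (\<lambda>x. inv\<^bsub>G\<^esub> x)"
    unfolding continuous_map_openin_preimage_eq
  proof (intro conjI allI impI)
    show "(\<lambda>x. inv\<^bsub>G\<^esub> x) \<in> topspace T \<rightarrow> topspace T"
      using tsG gG by (simp add: group.inv_closed)
    fix U' assume U': "openin T U'"
    show "openin T (topspace T \<inter> (\<lambda>x. inv\<^bsub>G\<^esub> x) -` U')"
    proof (subst openin_subopen, intro ballI)
      fix x assume "x \<in> topspace T \<inter> (\<lambda>x. inv\<^bsub>G\<^esub> x) -` U'"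
      hence xG: "x \<in> carrier G" and xU: "inv\<^bsub>G\<^esub> x \<in> U'" using tsG by auto
      have ixG: "inv\<^bsub>G\<^esub> x \<in> carrier G" using gG xG by (simp add: group.inv_closed)
      define U where "U = {y \<in> topspace T. inv\<^bsub>G\<^esub> x \<otimes>\<^bsub>G\<^esub> y \<in> U'}"
      have Uo: "openin T U" unfolding U_def
        by (rule openin_continuous_map_preimage[OF para_left_cont[OF assms(1) ixG] U'])
      have "\<one>\<^bsub>G\<^esub> \<in> U" using xU gG ixG tsG
        by (simp add: U_def group.is_monoid monoid.one_closed monoid.r_one)
      then obtain W where Wo: "openin T W" and W1: "\<one>\<^bsub>G\<^esub> \<in> W"
        and WU: "\<forall>w\<in>W. inv\<^bsub>G\<^esub> w \<in> U"
        using key[OF assms Uo] by blast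
      define W' where "W' = {z \<in> topspace T. z \<otimes>\<^bsub>G\<^esub> inv\<^bsub>G\<^esub> x \<in> W}"
      have W'o: "openin T W'" unfolding W'_def
        by (rule openin_continuous_map_preimage[OF para_right_cont[OF assms(1) ixG] Wo])
      have xW': "x \<in> W'" using W1 xG gG tsG by (simp add: W'_def group.r_inv)
      have "W' \<subseteq> topspace T \<inter> (\<lambda>x. inv\<^bsub>G\<^esub> x) -` U'"
      proof
        fix z assume zW: "z \<in> W'"
        hence zG: "z \<in> carrier G" using tsG W'_def by auto
        have "inv\<^bsub>G\<^esub> (z \<otimes>\<^bsub>G\<^esub> inv\<^bsub>G\<^esub> x) \<in> U" using WU zW W'_def by auto
        moreover have "inv\<^bsub>G\<^esub> (z \<otimes>\<^bsub>G\<^esub> inv\<^bsub>G\<^esub> x) = x \<otimes>\<^bsub>G\<^esub> inv\<^bsub>G\<^esub> z"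
          using gG zG xG ixG by (metis group.inv_mult_group group.inv_inv group.inv_closed)
        ultimately have "inv\<^bsub>G\<^esub> x \<otimes>\<^bsub>G\<^esub> (x \<otimes>\<^bsub>G\<^esub> inv\<^bsub>G\<^esub> z) \<in> U'" using U_def by auto
        moreover have "inv\<^bsub>G\<^esub> x \<otimes>\<^bsub>G\<^esub> (x \<otimes>\<^bsub>G\<^esub> inv\<^bsub>G\<^esub> z) = inv\<^bsub>G\<^esub> z"
        proof -
          interpret G: group G by (rule gG)
          show ?thesis using zG xG by (simp add: G.m_assoc[symmetric])
        qed
        ultimately show "z \<in> topspace T \<inter> (\<lambda>x. inv\<^bsub>G\<^esub> x) -` U'" using zG tsG by auto
      qed
      then show "\<exists>T'. openin T T' \<and> x \<in> T' \<and> T' \<subseteq> topspace T \<inter> (\<lambda>x. inv\<^bsub>G\<^esub> x) -` U'"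
        using W'o xW' by blast
    qed
  qed
  then show ?thesis using assms(1) unfolding topological_group_def by simp
qed

end
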